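(* Let $K=(S,L,\to)$ be a Kripke structure and $s,t\in S$. Then $s\approx_L^{\Delta\delta}t$ if and only if for every $\mathsf{LTL}_\infty$ formula $\psi$: $s\models\psi\iff t\models\psi$.
   Context: Fix a set $\mathbf{AP}$ of atomic propositions. A Kripke structure is $K=(S,L,\to)$ with $L:S\to\mathcal{P}(\mathbf{AP})$ and $\to\subseteq S\times S$ (not necessarily total). Paths are finite sequences $s_0,\dots,s_n$ or infinite sequences $s_0,s_1,\dots$ with $s_k\to s_{k+1}$; a path is maximal if infinite or if its last state has no successor. For a path $\pi$, $L(\pi)$ is obtained from $L(s_0),L(s_1),\dots$ by contracting each maximal (finite or infinite) block of consecutive equal entries to one entry. For paths $\pi$ from $s$: $L(\pi)$ is a complete $L$-coloured trace of $s$ if $\pi$ is maximal, a divergent one if $\pi$ is infinite and $L(\pi)$ finite, and a deadlock one if $\pi$ is finite and maximal. $s\approx_L^{\Delta\delta}t$ iff $s$ and $t$ have the same complete, the same divergent and the same deadlock $L$-coloured traces. $\mathsf{LTL}_\infty$ formulas: $\psi::=p\mid\neg\psi\mid\bigwedge\Psi'\mid\psi\,\mathsf{U}\,\psi\mid\infty$ with $p\in\mathbf{AP}$ and $\Psi'$ an arbitrary set. On maximal paths: $\pi\models p$ iff $p$ is in the label of the first state of $\pi$; negation and conjunction as usual; $\pi\models\psi\,\mathsf{U}\,\psi'$ iff some suffix $\pi'$ of $\pi$ has $\pi'\models\psi'$ and $\pi''\models\psi$ for every suffix $\pi''$ of $\pi$ of which $\pi'$ is a proper suffix; $\pi\models\infty$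 iff $\pi$ is infinite. For a state, $s\models\psi$ iff $\pi\models\psi$ for all maximal paths $\pi$ from $s$. *)

theory Defs
  imports Main "HOL-Library.Infinite_Set"
begin

datatype 'a seq = FinS "'a list" | InfS "nat \<Rightarrow> 'a"

fun seq_map :: "('a \<Rightarrow> 'b) \<Rightarrow> 'a seq \<Rightarrow> 'b seq" where
  "seq_map g (FinS xs) = FinS (map g xs)"
| "seq_map g (InfS f) = InfS (g \<circ> f)"

fun seq_hd :: "'a seq \<Rightarrow> 'a" where
  "seq_hd (FinS xs) = hd xs"
| "seq_hd (InfS f) = f 0"

fun seq_drop :: "nat \<Rightarrow> 'a seq \<Rightarrow> 'a seq" where
  "seq_drop i (FinS xs) = FinS (drop i xs)"
| "seq_drop i (InfS f) = InfS (\<lambda>k. f (k + i))"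

text \<open>valid positions; suffixes of a sequence are exactly seq_drop i for valid i\<close>
fun seq_idx :: "'a seq \<Rightarrow> nat \<Rightarrow> bool" where
  "seq_idx (FinS xs) i = (i < length xs)"
| "seq_idx (InfS f) i = True"

fun seq_infinite :: "'a seq \<Rightarrow> bool" where
  "seq_infinite (FinS xs) = False"
| "seq_infinite (InfS f) = True"

text \<open>A Kripke structure K = (S, L, \<rightarrow>) is given by the state type 's (S = UNIV),
  a labelling L :: 's \<Rightarrow> 'p set and a (not necessarily total) transition
  relation R :: 's \<Rightarrow> 's \<Rightarrow> bool.\<close>

fun is_path_from :: "('s \<Rightarrow> 's \<Rightarrow> bool) \<Rightarrow> 's \<Rightarrow> 's seq \<Rightarrow> bool" where
  "is_path_from R s (FinS xs) =
     (xs \<noteq> [] \<and> hd xs = s \<and> (\<forall>k. Suc k < length xs \<longrightarrow> R (xs ! k) (xs ! Suc k)))"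
| "is_path_from R s (InfS f) = (f 0 = s \<and> (\<forall>k. R (f k) (f (Suc k))))"

fun is_maximal :: "('s \<Rightarrow> 's \<Rightarrow> bool) \<Rightarrow> 's seq \<Rightarrow> bool" where
  "is_maximal R (FinS xs) = (\<forall>u. \<not> R (last xs) u)"
| "is_maximal R (InfS f) = True"

text \<open>Each maximal (finite or infinite) block of consecutive equal entries is
  contracted to one entry.\<close>

fun destutter :: "'a seq \<Rightarrow> 'a seq" where
  "destutter (FinS xs) = FinS (remdups_adj xs)"
| "destutter (InfS f) =
     (if \<exists>N. \<forall>k\<ge>N. f k = f N
      then FinS (remdups_adj (map f [0..<Suc (LEAST N. \<forall>k\<ge>N. f k = f N)]))
      else InfS (\<lambda>n. f (enumerate {k. k = 0 \<or> f k \<noteq> f (k - 1)} n)))"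

definition coloured :: "('s \<Rightarrow> 'p set) \<Rightarrow> 's seq \<Rightarrow> 'p set seq" where
  "coloured L \<pi> = destutter (seq_map L \<pi>)"

definition complete_traces :: "('s \<Rightarrow> 's \<Rightarrow> bool) \<Rightarrow> ('s \<Rightarrow> 'p set) \<Rightarrow> 's \<Rightarrow> 'p set seq set" where
  "complete_traces R L s = {coloured L \<pi> | \<pi>. is_path_from R s \<pi> \<and> is_maximal R \<pi>}"

definition divergent_traces :: "('s \<Rightarrow> 's \<Rightarrow> bool) \<Rightarrow> ('s \<Rightarrow> 'p set) \<Rightarrow> 's \<Rightarrow> 'p set seq set" where
  "divergent_traces R L s = {coloured L \<pi> | \<pi>. is_path_from R s \<pi> \<and> seq_infinite \<pi>
                                              \<and> \<not> seq_infinite (coloured L \<pi>)}"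

definition deadlock_traces :: "('s \<Rightarrow> 's \<Rightarrow> bool) \<Rightarrow> ('s \<Rightarrow> 'p set) \<Rightarrow> 's \<Rightarrow> 'p set seq set" where
  "deadlock_traces R L s = {coloured L \<pi> | \<pi>. is_path_from R s \<pi> \<and> \<not> seq_infinite \<pi>
                                             \<and> is_maximal R \<pi>}"

definition div_dead_equiv :: "('s \<Rightarrow> 's \<Rightarrow> bool) \<Rightarrow> ('s \<Rightarrow> 'p set) \<Rightarrow> 's \<Rightarrow> 's \<Rightarrow> bool" where
  "div_dead_equiv R L s t \<longleftrightarrow>
     complete_traces R L s = complete_traces R L t \<and>
     divergent_traces R L s = divergent_traces R L t \<and>
     deadlock_traces R L s = deadlock_traces R L t"

text \<open>The satisfaction of an LTL_\<infinity> formula by a path depends only on the label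
  sequence of the path. ltl_inf is the set of meanings of LTL_\<infinity> formulas, as
  predicates on label sequences: the least set closed under the semantic
  counterparts of the formula constructors (conjunction over arbitrary sets).\<close>

inductive_set ltl_inf :: "('p set seq \<Rightarrow> bool) set" where
  atom: "(\<lambda>w. p \<in> seq_hd w) \<in> ltl_inf"
| neg: "\<phi> \<in> ltl_inf \<Longrightarrow> (\<lambda>w. \<not> \<phi> w) \<in> ltl_inf"
| conj: "(\<forall>\<phi>\<in>\<Phi>. \<phi> \<in> ltl_inf) \<Longrightarrow> (\<lambda>w. \<forall>\<phi>\<in>\<Phi>. \<phi> w) \<in> ltl_inf"
| until: "\<phi> \<in> ltl_inf \<Longrightarrow> \<psi> \<in> ltl_inf \<Longrightarrow>
    (\<lambda>w. \<exists>i. seq_idx w i \<and> \<psi> (seq_drop i w) \<and> (\<forall>j<i. \<phi> (seq_drop j w))) \<in> ltl_inf"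
| infty: "(\<lambda>w. seq_infinite w) \<in> ltl_inf"

definition state_sat :: "('s \<Rightarrow> 's \<Rightarrow> bool) \<Rightarrow> ('s \<Rightarrow> 'p set) \<Rightarrow> 's \<Rightarrow> ('p set seq \<Rightarrow> bool) \<Rightarrow> bool" where
  "state_sat R L s \<psi> \<longleftrightarrow> (\<forall>\<pi>. is_path_from R s \<pi> \<and> is_maximal R \<pi> \<longrightarrow> \<psi> (seq_map L \<pi>))"

end

theory Submission
  imports Defs
begin


fun seq_nth :: "'a seq \<Rightarrow> nat \<Rightarrow> 'a" where
  "seq_nth (FinS xs) i = xs ! i"
| "seq_nth (InfS f) i = f i"

lemma idx_drop[simp]: "seq_idx (seq_drop i w) k = seq_idx w (i + k)"
  by (cases w) auto

lemma nth_drop': "seq_idx w i \<Longrightarrow> seq_nth (seq_drop i w) k = seq_nth w (i + k)"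
  by (cases w) (auto simp: add.commute)

lemma hd_nth: "seq_idx w 0 \<Longrightarrow> seq_hd w = seq_nth w 0"
  by (cases w) (auto simp: hd_conv_nth)

lemma idx_down: "seq_idx w k \<Longrightarrow> i \<le> k \<Longrightarrow> seq_idx w i"
  by (cases w) auto

lemma inf_drop[simp]: "seq_infinite (seq_drop i w) = seq_infinite w"
  by (cases w) auto

lemma seq_ext:
  assumes "\<And>i. seq_idx v i \<longleftrightarrow> seq_idx v' i"
    and "\<And>i. seq_idx v i \<Longrightarrow> seq_nth v i = seq_nth v' i"
  shows "v = v'"
proof (cases v)
  case (FinS xs)
  show ?thesis
  proof (cases v')
    case (FinS ys)
    have "length xs = length ys"
      using assms(1)[of "length xs"] assms(1)[of "length ys"] \<open>v = FinS xs\<close> FinS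
      by (simp add: not_less) 
    then show ?thesis using assms \<open>v = FinS xs\<close> FinS by (auto intro: nth_equalityI)
  next
    case (InfS f)
    then show ?thesis using assms(1)[of "length xs"] \<open>v = FinS xs\<close> by simp
  qed
next
  case (InfS f)
  show ?thesis
  proof (cases v')
    case (FinS ys)
    then show ?thesis using assms(1)[of "length ys"] InfS by simp
  next
    case (InfS g)
    then show ?thesis using assms \<open>v = InfS f\<close> by auto
  qed
qed

lemma idx_map[simp]: "seq_idx (seq_map g w) i = seq_idx w i"
  by (cases w) auto

lemma nth_map': "seq_idx w i \<Longrightarrow> seq_nth (seq_map g w) i = g (seq_nth w i)"
  by (cases w) auto

lemma inf_map[simp]: "seq_infinite (seq_map g w) = seq_infinite w"
  by (cases w) auto

fun blkf :: "(nat \<Rightarrow> 'a) \<Rightarrow> nat \<Rightarrow> nat" where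
  "blkf g 0 = 0"
| "blkf g (Suc i) = blkf g i + (if g (Suc i) \<noteq> g i then 1 else 0)"

lemma blkf_mono: "i \<le> k \<Longrightarrow> blkf g i \<le> blkf g k"
  by (induct k rule: dec_induct) auto

lemma blkf_less: "blkf g i < blkf g k \<Longrightarrow> i < k"
  using blkf_mono[of k i g] by (cases "k \<le> i") auto

lemma blkf_ivt: "n \<le> blkf g k \<Longrightarrow> \<exists>i\<le>k. blkf g i = n"
proof (induct k)
  case 0 then show ?case by auto
next
  case (Suc k)
  show ?case
  proof (cases "n \<le> blkf g k")
    case True then show ?thesis using Suc by (meson le_SucI)
  next
    case False
    then have "blkf g (Suc k) = n" using Suc.prems by (auto split: if_splits)
    then show ?thesis by blast
  qed
qed

lemma blkf_cong: "(\<And>k. k \<le> i \<Longrightarrow> g k = g' k) \<Longrightarrow> blkf g i = blkf g' i"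
  by (induct i) auto

lemma blkf_add: "blkf g (i + k) = blkf g i + blkf (\<lambda>k. g (i + k)) k"
  by (induct k) auto

lemma blkf_const: assumes "\<And>k. k \<le> i \<Longrightarrow> g k = g 0" shows "blkf g i = 0"
  using assms proof (induct i)
  case (Suc i)
  have "g (Suc i) = g 0" using Suc.prems[of "Suc i"] by simp
  moreover have "g i = g 0" using Suc.prems[of i] by simp
  moreover have "blkf g i = 0" by (rule Suc.hyps) (rule Suc.prems, simp)
  ultimately show ?case by simp
qed simp

lemma blkf_const2: assumes "\<And>k. N \<le> k \<Longrightarrow> g k = g N" "N \<le> i" shows "blkf g i = blkf g N"
  using assms(2) proof (induct i rule: dec_induct)
  case (step n) then show ?case using assms(1)[of n] assms(1)[of "Suc n"] by simp
qed simp

definition blk :: "'a seq \<Rightarrow> nat \<Rightarrow> nat" where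
  "blk w = blkf (seq_nth w)"

definition Rep :: "'a seq \<Rightarrow> 'a seq \<Rightarrow> bool" where
  "Rep w v \<longleftrightarrow> (\<forall>j. seq_idx v j \<longleftrightarrow> (\<exists>i. seq_idx w i \<and> blk w i = j)) \<and>
     (\<forall>i. seq_idx w i \<longrightarrow> seq_nth v (blk w i) = seq_nth w i)"

lemma Rep_unique: "Rep w v \<Longrightarrow> Rep w v' \<Longrightarrow> v = v'"
  unfolding Rep_def by (rule seq_ext) metis+

lemma Rep_nodup:
  assumes "Rep w v" "seq_idx v (Suc k)"
  shows "seq_nth v (Suc k) \<noteq> seq_nth v k"
proof -
  obtain i0 where i0: "seq_idx w i0" "blk w i0 = Suc k" using assms unfolding Rep_def by blast
  define i where "i = (LEAST i. blk w i = Suc k)"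
  have bi: "blk w i = Suc k" unfolding i_def by (rule LeastI[of _ i0]) (rule i0(2))
  have "i \<le> i0" unfolding i_def by (rule Least_le) (rule i0(2))
  then have vi: "seq_idx w i" using i0 idx_down by blast
  have "i \<noteq> 0"
  proof
    assume "i = 0" then show False using bi by (simp add: blk_def)
  qed
  then obtain p where p: "i = Suc p" by (cases i) auto
  have "blk w p \<noteq> Suc k" using not_less_Least[of p "\<lambda>i. blk w i = Suc k"] p i_def by auto
  then have bp: "blk w p = k" and ch: "seq_nth w i \<noteq> seq_nth w p"
    using bi p by (auto simp: blk_def split: if_splits)
  have vp: "seq_idx w p" using vi p idx_down by (metis le_SucI order_refl)
  show ?thesis using assms(1) vi vp bi bp ch unfolding Rep_def by metis
qed

lemma remdups_adj_snoc:
  "xs \<noteq> [] \<Longrightarrow> remdups_adj (xs @ [y]) = remdups_adj xs @ (if last xs = y then [] else [y])"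
proof -
  assume a: "xs \<noteq> []"
  have e1: "butlast xs @ [last xs, y] = xs @ [y]" using a
    by (metis append.assoc append_Cons append_Nil append_butlast_last_id)
  have e2: "butlast xs @ [last xs] = xs" using a by simp
  show ?thesis using remdups_adj_append_two[of "butlast xs" "last xs" y] unfolding e1 e2 .
qed

lemma remdups_list:
  "xs \<noteq> [] \<Longrightarrow> length (remdups_adj xs) = Suc (blkf (nth xs) (length xs - 1)) \<and>
     (\<forall>i<length xs. remdups_adj xs ! blkf (nth xs) i = xs ! i)"
proof (induct xs rule: rev_induct)
  case Nil then show ?case by simp
next
  case (snoc y xs)
  show ?case
  proof (cases "xs = []")
    case True then show ?thesis by simp
  next
    case False
    define n where "n = length xs"
    have n0: "n > 0" using False n_def by auto
    have IH: "length (remdups_adj xs) = Suc (blkf (nth xs) (n - 1))"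
       "\<And>i. i < n \<Longrightarrow> remdups_adj xs ! blkf (nth xs) i = xs ! i"
      using snoc.hyps[OF False] n_def by auto
    have cg: "\<And>i. i < n \<Longrightarrow> blkf (nth (xs @ [y])) i = blkf (nth xs) i"
      by (rule blkf_cong) (simp add: nth_append n_def)
    have ln: "last xs = xs ! (n - 1)" using False n_def by (simp add: last_conv_nth)
    have bn: "blkf (nth (xs @ [y])) n = blkf (nth xs) (n - 1) + (if y \<noteq> xs ! (n - 1) then 1 else 0)"
      using n0 cg[of "n - 1"] by (cases n) (auto simp: nth_append n_def)
    have len: "length (remdups_adj (xs @ [y])) = Suc (blkf (nth (xs @ [y])) n)"
      using IH(1) bn ln by (simp add: remdups_adj_snoc[OF False])
    have "\<forall>i<Suc n. remdups_adj (xs @ [y]) ! blkf (nth (xs @ [y])) i = (xs @ [y]) ! i"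
    proof (intro allI impI)
      fix i assume "i < Suc n"
      show "remdups_adj (xs @ [y]) ! blkf (nth (xs @ [y])) i = (xs @ [y]) ! i"
      proof (cases "i < n")
        case True
        have "i \<le> n - 1" using True by simp
        then have "blkf (nth xs) i < length (remdups_adj xs)"
          using IH(1) blkf_mono[of i "n - 1" "nth xs"] by simp
        then show ?thesis using True cg IH(2) n_def
          by (simp add: remdups_adj_snoc[OF False] nth_append)
      next
        case False
        then have "i = n" using \<open>i < Suc n\<close> by simp
        have yn: "(xs @ [y]) ! n = y" by (simp add: n_def)
        show ?thesis
        proof (cases "last xs = y")
          case True
          have "blkf (nth (xs @ [y])) n = blkf (nth xs) (n - 1)" using bn ln True by simp
          moreover have "remdups_adj (xs @ [y]) = remdups_adj xs"
            using True remdups_adj_snoc[OF \<open>xs \<noteq> []\<close>] by simp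
          moreover have "remdups_adj xs ! blkf (nth xs) (n - 1) = xs ! (n - 1)" using IH(2) n0 by simp
          ultimately show ?thesis using \<open>i = n\<close> yn ln True by simp
        next
          case False
          have "blkf (nth (xs @ [y])) n = length (remdups_adj xs)" using bn ln False IH(1) by simp
          moreover have "remdups_adj (xs @ [y]) = remdups_adj xs @ [y]"
            using False remdups_adj_snoc[OF \<open>xs \<noteq> []\<close>] by simp
          ultimately show ?thesis using \<open>i = n\<close> yn by simp
        qed
      qed
    qed
    note AA = this
    have L1: "length (xs @ [y]) = Suc n" by (simp add: n_def)
    have L2: "Suc n - 1 = n" by simp
    show ?thesis unfolding L1 L2 using len AA by (rule conjI)
  qed
qed



lemma seq_nth_FinS: "seq_nth (FinS xs) = nth xs" by (rule ext) simp
lemma seq_nth_InfS: "seq_nth (InfS f) = f" by (rule ext) simp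

lemma rep_fin:
  assumes "xs \<noteq> []"
  shows "Rep (FinS xs) (FinS (remdups_adj xs))"
proof -
  note R = remdups_list[OF assms]
  have b: "blk (FinS xs) = blkf (nth xs)" by (simp add: blk_def seq_nth_FinS)
  have 1: "\<forall>j. (j < length (remdups_adj xs)) \<longleftrightarrow> (\<exists>i<length xs. blkf (nth xs) i = j)"
  proof (intro allI iffI)
    fix j assume "j < length (remdups_adj xs)"
    then have "j \<le> blkf (nth xs) (length xs - 1)" using R by simp
    then obtain i where "i \<le> length xs - 1" "blkf (nth xs) i = j" using blkf_ivt by blast
    then show "\<exists>i<length xs. blkf (nth xs) i = j" using assms
      by (metis One_nat_def Suc_pred length_greater_0_conv less_Suc_eq_le)
  next
    fix j assume "\<exists>i<length xs. blkf (nth xs) i = j"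
    then obtain i where "i < length xs" "blkf (nth xs) i = j" by blast
    moreover have "i \<le> length xs - 1" using \<open>i < length xs\<close> by simp
    ultimately show "j < length (remdups_adj xs)" using R blkf_mono[of i "length xs - 1" "nth xs"] by simp
  qed
  show ?thesis unfolding Rep_def b using 1 R by auto
qed

lemma rep_evconst:
  assumes hN: "\<And>k. N \<le> k \<Longrightarrow> f k = f N"
  shows "Rep (InfS f) (FinS (remdups_adj (map f [0..<Suc N])))"
proof -
  define xs where "xs = map f [0..<Suc N]"
  have xs0: "xs \<noteq> []" by (simp add: xs_def)
  note R = remdups_list[OF xs0]
  have lx: "length xs = Suc N" by (simp add: xs_def)
  have nx: "\<And>k. k \<le> N \<Longrightarrow> xs ! k = f k" unfolding xs_def
    by (metis add_0 diff_zero le_imp_less_Suc nth_map_upt)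
  have b: "blk (InfS f) = blkf f" by (simp add: blk_def seq_nth_InfS)
  have cg: "\<And>i. i \<le> N \<Longrightarrow> blkf (nth xs) i = blkf f i" by (rule blkf_cong) (simp add: nx)
  have c2: "\<And>i. N \<le> i \<Longrightarrow> blkf f i = blkf f N" by (rule blkf_const2[of N f, OF hN])
  have L: "length (remdups_adj xs) = Suc (blkf f N)" using R lx cg[of N] by simp
  have 1: "\<forall>j. (j < length (remdups_adj xs)) \<longleftrightarrow> (\<exists>i. blkf f i = j)"
  proof (intro allI iffI)
    fix j assume "j < length (remdups_adj xs)"
    then have "j \<le> blkf f N" using L by simp
    then show "\<exists>i. blkf f i = j" using blkf_ivt by blast
  next
    fix j assume "\<exists>i. blkf f i = j"
    then obtain i where i: "blkf f i = j" by blast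
    show "j < length (remdups_adj xs)"
    proof (cases "i \<le> N")
      case True then show ?thesis using i L blkf_mono[of i N f] by simp
    next
      case False then show ?thesis using i L c2[of i] by simp
    qed
  qed
  have 2: "\<forall>i. remdups_adj xs ! blkf f i = f i"
  proof
    fix i show "remdups_adj xs ! blkf f i = f i"
    proof (cases "i \<le> N")
      case True
      then have "i < length xs" using lx by simp
      then show ?thesis using R cg[of i] nx[of i] True by metis
    next
      case False
      then have "blkf f i = blkf f N" "f i = f N" using c2[of i] hN[of i] by auto
      moreover have "N < length xs" using lx by simp
      ultimately show ?thesis using R cg[of N] nx[of N] by (metis order_refl)
    qed
  qed
  show ?thesis unfolding Rep_def b xs_def[symmetric] using 1 2 by auto
qed

lemma rep_inf:
  assumes nc: "\<not> (\<exists>N. \<forall>k\<ge>N. f k = f N)"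
  shows "Rep (InfS f) (InfS (\<lambda>n. f (enumerate {k. k = 0 \<or> f k \<noteq> f (k - 1)} n)))"
proof -
  define C where "C = {k. k = 0 \<or> f k \<noteq> f (k - 1)}"
  define e where "e = enumerate C"
  have infC: "infinite C"
  proof
    assume fC: "finite C"
    define N where "N = Suc (Max C)"
    have nC: "\<And>k. N \<le> k \<Longrightarrow> k \<notin> C"
      using fC N_def Max_ge by fastforce
    have "\<forall>k\<ge>N. f k = f N"
    proof (intro allI impI)
      fix k assume "N \<le> k"
      then show "f k = f N"
      proof (induct k rule: dec_induct)
        case (step m)
        have "Suc m \<notin> C" using nC step.hyps(1) by simp
        then have "f (Suc m) = f m" unfolding C_def by simp
        then show ?case using step.hyps(3) by simp
      qed simp
    qed
    then show False using nc by blast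
  qed
  have e0: "e 0 = 0" unfolding e_def enumerate_0 C_def by (rule Least_equality) auto
  have eC: "\<And>n. e n \<in> C" unfolding e_def using enumerate_in_set[OF infC] .
  have emono: "\<And>m n. e m < e n \<longleftrightarrow> m < n" unfolding e_def using infC by simp
  have btw: "\<And>n k. e n < k \<Longrightarrow> k < e (Suc n) \<Longrightarrow> k \<notin> C"
  proof -
    fix n k assume a: "e n < k" "k < e (Suc n)"
    have "e (Suc n) = (LEAST s. s \<in> C \<and> e n < s)" unfolding e_def by (rule enumerate_Suc''[OF infC])
    then show "k \<notin> C" using a not_less_Least[of k "\<lambda>s. s \<in> C \<and> e n < s"] by auto
  qed
  have inner: "\<And>n d. blkf f (e n) = n \<Longrightarrow> e n + d < e (Suc n) \<Longrightarrow>
      blkf f (e n + d) = n \<and> f (e n + d) = f (e n)"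
  proof -
    fix n d assume b: "blkf f (e n) = n"
    show "e n + d < e (Suc n) \<Longrightarrow> blkf f (e n + d) = n \<and> f (e n + d) = f (e n)"
    proof (induct d)
      case 0 then show ?case using b by simp
    next
      case (Suc d)
      then have ih: "blkf f (e n + d) = n \<and> f (e n + d) = f (e n)" by simp
      have "Suc (e n + d) \<notin> C" using btw[of n "Suc (e n + d)"] Suc.prems by simp
      then have "f (Suc (e n + d)) = f (e n + d)" unfolding C_def by simp
      then show ?case using ih by simp
    qed
  qed
  have key: "\<And>n. blkf f (e n) = n"
  proof -
    fix n show "blkf f (e n) = n"
    proof (induct n)
      case 0 then show ?case using e0 by simp
    next
      case (Suc n)
      have lt: "e n < e (Suc n)" using emono by simp
      define d where "d = e (Suc n) - e n - 1"
      have ed: "e (Suc n) = Suc (e n + d)" using lt d_def by simp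
      have "e n + d < e (Suc n)" using ed by simp
      then have ih: "blkf f (e n + d) = n" using inner[OF Suc] by simp
      have "e (Suc n) \<in> C" by (rule eC)
      moreover have "e (Suc n) \<noteq> 0" using ed by simp
      ultimately have "f (e (Suc n)) \<noteq> f (e n + d)" unfolding C_def using ed by simp
      then have ne: "f (Suc (e n + d)) \<noteq> f (e n + d)" using ed by simp
      have "blkf f (Suc (e n + d)) = Suc n" using ih ne by simp
      then show ?case using ed by simp
    qed
  qed
  have cover: "\<And>i. \<exists>n d. i = e n + d \<and> e n + d < e (Suc n)"
  proof -
    fix i
    have ex: "i < e (Suc i)" using le_enumerate[OF infC, of "Suc i"] unfolding e_def by simp
    define m where "m = (LEAST m. i < e m)"
    have im: "i < e m" unfolding m_def by (rule LeastI[of _ "Suc i"]) (rule ex)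
    have "m \<noteq> 0"
    proof
      assume "m = 0" then show False using im e0 by simp
    qed
    then obtain n where mn: "m = Suc n" by (cases m) auto
    have "\<not> i < e n" using not_less_Least[of n "\<lambda>m. i < e m"] mn m_def by simp
    then show "\<exists>n d. i = e n + d \<and> e n + d < e (Suc n)" using im mn
      by (intro exI[of _ n] exI[of _ "i - e n"]) simp
  qed
  have 1: "\<And>j. \<exists>i. blkf f i = j" using key by blast
  have 2: "\<And>i. f (e (blkf f i)) = f i"
  proof -
    fix i obtain n d where "i = e n + d" "e n + d < e (Suc n)" using cover by blast
    then show "f (e (blkf f i)) = f i" using inner[OF key] by simp
  qed
  show ?thesis unfolding Rep_def blk_def seq_nth_InfS C_def[symmetric] e_def[symmetric]
    using 1 2 by simp
qed

lemma rep_destutter: "seq_idx w 0 \<Longrightarrow> Rep w (destutter w)"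
proof (cases w)
  case (FinS xs)
  assume "seq_idx w 0"
  then show ?thesis using FinS rep_fin[of xs] by auto
next
  case (InfS f)
  show ?thesis
  proof (cases "\<exists>N. \<forall>k\<ge>N. f k = f N")
    case True
    define N where "N = (LEAST N. \<forall>k\<ge>N. f k = f N)"
    have hN: "\<forall>k\<ge>N. f k = f N" unfolding N_def using True by (rule LeastI_ex)
    have d: "destutter (InfS f) = FinS (remdups_adj (map f [0..<Suc N]))" using InfS True N_def by simp
    show ?thesis unfolding InfS d by (rule rep_evconst) (use hN in blast)
  next
    case False
    then have d: "destutter (InfS f) = InfS (\<lambda>n. f (enumerate {k. k = 0 \<or> f k \<noteq> f (k - 1)} n))"
      by (simp only: destutter.simps if_False)
    show ?thesis unfolding InfS d by (rule rep_inf) (rule False)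
  qed
qed





definition Eqv :: "'a seq \<Rightarrow> 'a seq \<Rightarrow> bool" where
  "Eqv w w' \<longleftrightarrow> seq_idx w 0 \<and> seq_idx w' 0 \<and> seq_infinite w = seq_infinite w' \<and>
     (\<forall>j. (\<exists>i. seq_idx w i \<and> blk w i = j) \<longleftrightarrow> (\<exists>i. seq_idx w' i \<and> blk w' i = j)) \<and>
     (\<forall>i i'. seq_idx w i \<longrightarrow> seq_idx w' i' \<longrightarrow> blk w i = blk w' i' \<longrightarrow> seq_nth w i = seq_nth w' i')"

lemma Eqv_sym: "Eqv w w' \<Longrightarrow> Eqv w' w"
  unfolding Eqv_def by metis

lemma nth_drop_fun: "seq_idx w i \<Longrightarrow> seq_nth (seq_drop i w) = (\<lambda>m. seq_nth w (i + m))"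
  by (rule ext) (rule nth_drop')

lemma blk_drop: "seq_idx w i \<Longrightarrow> blk w (i + k) = blk w i + blk (seq_drop i w) k"
  unfolding blk_def nth_drop_fun by (rule blkf_add)

lemma blk_mono: "i \<le> k \<Longrightarrow> blk w i \<le> blk w k"
  unfolding blk_def by (rule blkf_mono)

lemma blk_less: "blk w i < blk w k \<Longrightarrow> i < k"
  unfolding blk_def by (rule blkf_less)

lemma img_drop:
  assumes "seq_idx w i"
  shows "(\<exists>k. seq_idx (seq_drop i w) k \<and> blk (seq_drop i w) k = j) \<longleftrightarrow>
         (\<exists>m. seq_idx w m \<and> blk w m = blk w i + j)"
proof
  assume "\<exists>k. seq_idx (seq_drop i w) k \<and> blk (seq_drop i w) k = j"
  then obtain k where "seq_idx w (i + k)" "blk (seq_drop i w) k = j" by auto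
  then show "\<exists>m. seq_idx w m \<and> blk w m = blk w i + j" using blk_drop[OF assms, of k] by auto
next
  assume "\<exists>m. seq_idx w m \<and> blk w m = blk w i + j"
  then obtain m where m: "seq_idx w m" "blk w m = blk w i + j" by blast
  show "\<exists>k. seq_idx (seq_drop i w) k \<and> blk (seq_drop i w) k = j"
  proof (cases "m < i")
    case True
    then have "j = 0" using blk_mono[of m i w] m by simp
    then show ?thesis using assms blk_drop[OF assms, of 0] by (intro exI[of _ 0]) simp
  next
    case False
    then have "m = i + (m - i)" by simp
    then show ?thesis using m blk_drop[OF assms, of "m - i"] by (intro exI[of _ "m - i"]) simp
  qed
qed

lemma Eqv_drop:
  assumes E: "Eqv w w'" and v: "seq_idx w i" "seq_idx w' i'" and b: "blk w i = blk w' i'"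
  shows "Eqv (seq_drop i w) (seq_drop i' w')"
  unfolding Eqv_def
proof (intro conjI allI impI)
  show "seq_idx (seq_drop i w) 0" "seq_idx (seq_drop i' w') 0" using v by simp_all
  show "seq_infinite (seq_drop i w) = seq_infinite (seq_drop i' w')" using E by (simp add: Eqv_def)
next
  fix j
  show "(\<exists>k. seq_idx (seq_drop i w) k \<and> blk (seq_drop i w) k = j) \<longleftrightarrow>
        (\<exists>k. seq_idx (seq_drop i' w') k \<and> blk (seq_drop i' w') k = j)"
    unfolding img_drop[OF v(1)] img_drop[OF v(2)] b using E unfolding Eqv_def by blast
next
  fix k k' assume a: "seq_idx (seq_drop i w) k" "seq_idx (seq_drop i' w') k'"
    "blk (seq_drop i w) k = blk (seq_drop i' w') k'"
  have "blk w (i + k) = blk w' (i' + k')" using a(3) b blk_drop[OF v(1), of k] blk_drop[OF v(2), of k'] by simp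
  then have "seq_nth w (i + k) = seq_nth w' (i' + k')" using E a unfolding Eqv_def by simp
  then show "seq_nth (seq_drop i w) k = seq_nth (seq_drop i' w') k'" using v by (simp add: nth_drop')
qed

lemma until_step:
  assumes E: "Eqv w w'"
    and IH1: "\<And>u u'. Eqv u u' \<Longrightarrow> \<phi> u = \<phi> u'"
    and IH2: "\<And>u u'. Eqv u u' \<Longrightarrow> \<psi> u = \<psi> u'"
    and H: "seq_idx w i" "\<psi> (seq_drop i w)" "\<forall>j<i. \<phi> (seq_drop j w)"
  shows "\<exists>i. seq_idx w' i \<and> \<psi> (seq_drop i w') \<and> (\<forall>j<i. \<phi> (seq_drop j w'))"
proof -
  define b where "b = blk w i"
  have "\<exists>i'. seq_idx w' i' \<and> blk w' i' = b" using E H(1) unfolding Eqv_def b_def by blast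
  define i0 where "i0 = (LEAST i'. seq_idx w' i' \<and> blk w' i' = b)"
  have i0: "seq_idx w' i0 \<and> blk w' i0 = b" unfolding i0_def
    using \<open>\<exists>i'. seq_idx w' i' \<and> blk w' i' = b\<close> by (rule LeastI_ex)
  have "\<psi> (seq_drop i0 w')" using IH2[OF Eqv_drop[OF E H(1) conjunct1[OF i0]]] H(2) i0 b_def by simp
  moreover have "\<forall>j'<i0. \<phi> (seq_drop j' w')"
  proof (intro allI impI)
    fix j' assume j': "j' < i0"
    have vj': "seq_idx w' j'" using i0 j' idx_down[of w' i0 j'] by simp
    have "blk w' j' \<noteq> b" using not_less_Least[of j' "\<lambda>i'. seq_idx w' i' \<and> blk w' i' = b"] j' vj'
      unfolding i0_def by blast
    moreover have "blk w' j' \<le> b" using blk_mono[of j' i0 w'] j' i0 by simp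
    ultimately have lt: "blk w' j' < b" by simp
    obtain j where j: "seq_idx w j" "blk w j = blk w' j'" using E vj' unfolding Eqv_def by blast
    have "j < i" using blk_less[of w j i] j lt b_def by simp
    then have "\<phi> (seq_drop j w)" using H(3) by simp
    then show "\<phi> (seq_drop j' w')" using IH1[OF Eqv_drop[OF E j(1) vj' j(2)]] by simp
  qed
  ultimately show ?thesis using i0 by blast
qed



lemma ltl_inv: "\<phi> \<in> ltl_inf \<Longrightarrow> \<forall>w w'. Eqv w w' \<longrightarrow> \<phi> w = \<phi> w'"
proof (induct rule: ltl_inf.induct)
  case (atom p)
  show ?case
  proof (intro allI impI)
    fix w w' :: "'a set seq" assume E: "Eqv w w'"
    then have "seq_idx w 0" "seq_idx w' 0" "seq_nth w 0 = seq_nth w' 0"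
      unfolding Eqv_def blk_def by auto
    then show "(p \<in> seq_hd w) = (p \<in> seq_hd w')" by (simp add: hd_nth)
  qed
next
  case (neg \<phi>)
  show ?case
  proof (intro allI impI)
    fix w w' :: "'a set seq" assume "Eqv w w'"
    then have "\<phi> w = \<phi> w'" using neg.hyps(2) by blast
    then show "(\<not> \<phi> w) = (\<not> \<phi> w')" by simp
  qed
next
  case (conj \<Phi>)
  show ?case
  proof (intro allI impI)
    fix w w' :: "'a set seq" assume E: "Eqv w w'"
    have "\<forall>\<phi>\<in>\<Phi>. \<phi> w = \<phi> w'"
    proof
      fix \<phi> assume "\<phi> \<in> \<Phi>"
      with conj.hyps have "\<phi> \<in> ltl_inf \<and> (\<forall>w w'. Eqv w w' \<longrightarrow> \<phi> w = \<phi> w')" by (rule bspec)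
      then have "\<forall>w w'. Eqv w w' \<longrightarrow> \<phi> w = \<phi> w'" by (rule conjunct2)
      then show "\<phi> w = \<phi> w'" using E by simp
    qed
    note Q = this
    show "(\<forall>\<phi>\<in>\<Phi>. \<phi> w) = (\<forall>\<phi>\<in>\<Phi>. \<phi> w')"
    proof
      assume a: "\<forall>\<phi>\<in>\<Phi>. \<phi> w"
      show "\<forall>\<phi>\<in>\<Phi>. \<phi> w'"
      proof
        fix \<phi> assume "\<phi> \<in> \<Phi>" then show "\<phi> w'" using a Q by auto
      qed
    next
      assume a: "\<forall>\<phi>\<in>\<Phi>. \<phi> w'"
      show "\<forall>\<phi>\<in>\<Phi>. \<phi> w"
      proof
        fix \<phi> assume "\<phi> \<in> \<Phi>" then show "\<phi> w" using a Q by auto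
      qed
    qed
  qed
next
  case (until \<phi> \<psi>)
  show ?case
  proof (intro allI impI iffI)
    fix w w' :: "'a set seq" assume E: "Eqv w w'"
    {
      assume "\<exists>i. seq_idx w i \<and> \<psi> (seq_drop i w) \<and> (\<forall>j<i. \<phi> (seq_drop j w))"
      then obtain i where "seq_idx w i" "\<psi> (seq_drop i w)" "\<forall>j<i. \<phi> (seq_drop j w)" by blast
      then show "\<exists>i. seq_idx w' i \<and> \<psi> (seq_drop i w') \<and> (\<forall>j<i. \<phi> (seq_drop j w'))"
        using until_step[OF E, of \<phi> \<psi>] until.hyps(2,4) by blast
    }
    {
      assume "\<exists>i. seq_idx w' i \<and> \<psi> (seq_drop i w') \<and> (\<forall>j<i. \<phi> (seq_drop j w'))"
      then obtain i where "seq_idx w' i" "\<psi> (seq_drop i w')" "\<forall>j<i. \<phi> (seq_drop j w')" by blast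
      then show "\<exists>i. seq_idx w i \<and> \<psi> (seq_drop i w) \<and> (\<forall>j<i. \<phi> (seq_drop j w))"
        using until_step[OF Eqv_sym[OF E], of \<phi> \<psi>] until.hyps(2,4) by blast
    }
  qed
next
  case infty then show ?case unfolding Eqv_def by blast
qed

lemma ltl_and: "a \<in> ltl_inf \<Longrightarrow> b \<in> ltl_inf \<Longrightarrow> (\<lambda>w. a w \<and> b w) \<in> ltl_inf"
proof -
  assume "a \<in> ltl_inf" "b \<in> ltl_inf"
  then have "(\<lambda>w. \<forall>\<phi>\<in>{a,b}. \<phi> w) \<in> ltl_inf" by (intro ltl_inf.conj) auto
  moreover have "(\<lambda>w. \<forall>\<phi>\<in>{a,b}. \<phi> w) = (\<lambda>w. a w \<and> b w)" by auto
  ultimately show ?thesis by simp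
qed

lemma ltl_ball: "(\<And>x. x \<in> S \<Longrightarrow> F x \<in> ltl_inf) \<Longrightarrow> (\<lambda>w. \<forall>x\<in>S. F x w) \<in> ltl_inf"
proof -
  assume "\<And>x. x \<in> S \<Longrightarrow> F x \<in> ltl_inf"
  then have "(\<lambda>w. \<forall>\<phi>\<in>F ` S. \<phi> w) \<in> ltl_inf" by (intro ltl_inf.conj) auto
  moreover have "(\<lambda>w. \<forall>\<phi>\<in>F ` S. \<phi> w) = (\<lambda>w. \<forall>x\<in>S. F x w)" by auto
  ultimately show ?thesis by simp
qed

lemma ltl_lbl: "(\<lambda>w. seq_hd w = A) \<in> ltl_inf"
proof -
  have "(\<lambda>w. \<forall>\<phi>\<in>(\<lambda>p w. p \<in> seq_hd w) ` A \<union> (\<lambda>p w. \<not> p \<in> seq_hd w) ` (- A). \<phi> w) \<in> ltl_inf"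
    by (intro ltl_inf.conj) (auto intro: ltl_inf.atom ltl_inf.neg)
  moreover have "(\<lambda>w. \<forall>\<phi>\<in>(\<lambda>p w. p \<in> seq_hd w) ` A \<union> (\<lambda>p w. \<not> p \<in> seq_hd w) ` (- A). \<phi> w)
     = (\<lambda>w. seq_hd w = A)" by (rule ext) auto
  ultimately show ?thesis by simp
qed

fun pre :: "'a list \<Rightarrow> 'a seq \<Rightarrow> bool" where
  "pre [] = (\<lambda>w. True)"
| "pre [A] = (\<lambda>w. seq_hd w = A)"
| "pre (A # B # xs) = (\<lambda>w. seq_hd w = A \<and>
     (\<exists>i. seq_idx w i \<and> pre (B # xs) (seq_drop i w) \<and> (\<forall>j<i. seq_hd (seq_drop j w) = A)))"

lemma pre_ltl: "pre xs \<in> ltl_inf"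
proof (induct xs rule: pre.induct)
  case 1
  have "(\<lambda>w. \<forall>\<phi>\<in>{}. \<phi> w) \<in> ltl_inf" by (intro ltl_inf.conj) auto
  then show ?case by simp
next
  case (2 A) then show ?case using ltl_lbl by simp
next
  case (3 A B xs)
  have "(\<lambda>w. \<exists>i. seq_idx w i \<and> pre (B # xs) (seq_drop i w) \<and> (\<forall>j<i. seq_hd (seq_drop j w) = A)) \<in> ltl_inf"
    using ltl_inf.until[OF ltl_lbl[of A] 3] .
  then show ?case using ltl_and[OF ltl_lbl[of A]] by simp
qed

definition nodupl :: "'a list \<Rightarrow> bool" where
  "nodupl xs \<longleftrightarrow> (\<forall>k. Suc k < length xs \<longrightarrow> xs ! Suc k \<noteq> xs ! k)"

definition M :: "'a seq \<Rightarrow> 'a list \<Rightarrow> nat \<Rightarrow> bool" where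
  "M w xs i \<longleftrightarrow> seq_idx w i \<and> blk w i = length xs - 1 \<and> (\<forall>k\<le>i. seq_nth w k = xs ! blk w k)"

lemma blk0[simp]: "blk w 0 = 0" by (simp add: blk_def)

lemma pre_sem: "seq_idx w 0 \<Longrightarrow> xs \<noteq> [] \<Longrightarrow> nodupl xs \<Longrightarrow> pre xs w \<longleftrightarrow> (\<exists>i. M w xs i)"
proof (induct xs arbitrary: w rule: pre.induct)
  case 1 then show ?case by simp
next
  case (2 A)
  show ?case
  proof
    assume "pre [A] w" then show "\<exists>i. M w [A] i" using 2 by (intro exI[of _ 0]) (simp add: M_def hd_nth)
  next
    assume "\<exists>i. M w [A] i"
    then obtain i where "M w [A] i" by blast
    then have "seq_nth w 0 = A" unfolding M_def by auto
    then show "pre [A] w" using 2 by (simp add: hd_nth)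
  qed
next
  case (3 A B xs)
  have AB: "A \<noteq> B" using 3(4) unfolding nodupl_def by (metis Suc_less_eq length_Cons nth_Cons_0 nth_Cons_Suc zero_less_Suc)
  have nd: "nodupl (B # xs)" using 3(4) unfolding nodupl_def
    by (metis Suc_less_eq length_Cons nth_Cons_Suc)
  show ?case
  proof
    assume P: "pre (A # B # xs) w"
    then have w0: "seq_nth w 0 = A" using 3(2) by (simp add: hd_nth)
    obtain i where i: "seq_idx w i" "pre (B # xs) (seq_drop i w)" "\<forall>j<i. seq_hd (seq_drop j w) = A"
      using P by auto
    have gA: "\<And>j. j < i \<Longrightarrow> seq_nth w j = A"
    proof -
      fix j assume "j < i"
      then have "seq_idx w j" using i(1) idx_down by (metis less_imp_le)
      then show "seq_nth w j = A" using i(3) \<open>j < i\<close> hd_nth[of "seq_drop j w"] nth_drop'[of w j 0] by simp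
    qed
    have "\<exists>i'. M (seq_drop i w) (B # xs) i'" using 3(1)[of "seq_drop i w"] i nd by simp
    then obtain i' where i': "M (seq_drop i w) (B # xs) i'" by blast
    have "seq_nth (seq_drop i w) 0 = B" using i' unfolding M_def by auto
    then have gi: "seq_nth w i = B" using nth_drop'[OF i(1), of 0] by simp
    have "i \<noteq> 0"
    proof
      assume "i = 0" then show False using gi w0 AB by simp
    qed
    then obtain p where p: "i = Suc p" by (cases i) auto
    have b0: "\<And>j. j < i \<Longrightarrow> blk w j = 0"
      unfolding blk_def by (rule blkf_const) (use gA w0 in simp)
    have bi: "blk w i = 1" using b0[of p] p gi gA[of p] AB by (simp add: blk_def)
    have bd: "\<And>k. blk w (i + k) = Suc (blk (seq_drop i w) k)" using blk_drop[OF i(1)] bi by simp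
    have "M w (A # B # xs) (i + i')" unfolding M_def
    proof (intro conjI allI impI)
      show "seq_idx w (i + i')" using i' unfolding M_def by simp
      show "blk w (i + i') = length (A # B # xs) - 1" using i' bd unfolding M_def by simp
    next
      fix k assume k: "k \<le> i + i'"
      show "seq_nth w k = (A # B # xs) ! blk w k"
      proof (cases "k < i")
        case True then show ?thesis using gA b0 by simp
      next
        case False
        then obtain k' where k': "k = i + k'" by (metis le_add_diff_inverse not_less)
        then have "k' \<le> i'" using k by simp
        then have "seq_nth (seq_drop i w) k' = (B # xs) ! blk (seq_drop i w) k'" using i' unfolding M_def by simp
        then show ?thesis using k' bd nth_drop'[OF i(1)] by simp
      qed
    qed
    then show "\<exists>i. M w (A # B # xs) i" by blast
  next
    assume "\<exists>i. M w (A # B # xs) i"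
    then obtain I where I: "M w (A # B # xs) I" by blast
    have w0: "seq_nth w 0 = A" using I unfolding M_def by auto
    have bI: "blk w I = Suc (length xs)" using I unfolding M_def by simp
    define i where "i = (LEAST i. blk w i \<noteq> 0)"
    have bi0: "blk w i \<noteq> 0" unfolding i_def by (rule LeastI[of _ I]) (simp add: bI)
    have iI: "i \<le> I" unfolding i_def by (rule Least_le) (simp add: bI)
    have bl: "\<And>j. j < i \<Longrightarrow> blk w j = 0" using not_less_Least i_def by blast
    have "i \<noteq> 0"
    proof
      assume "i = 0" then show False using bi0 by simp
    qed
    then obtain p where p: "i = Suc p" by (cases i) auto
    have bi: "blk w i = 1" using bl[of p] p bi0 by (simp add: blk_def split: if_splits)
    have vi: "seq_idx w i" using I iI idx_down unfolding M_def by blast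
    have gA: "\<And>j. j < i \<Longrightarrow> seq_nth w j = A" using I bl iI unfolding M_def
      by (metis less_imp_le_nat nth_Cons_0 order_trans)
    have bd: "\<And>k. blk w (i + k) = Suc (blk (seq_drop i w) k)" using blk_drop[OF vi] bi by simp
    have IiI: "I = i + (I - i)" using iI by simp
    have "M (seq_drop i w) (B # xs) (I - i)" unfolding M_def
    proof (intro conjI allI impI)
      show "seq_idx (seq_drop i w) (I - i)" using I IiI unfolding M_def by simp
      show "blk (seq_drop i w) (I - i) = length (B # xs) - 1" using bd[of "I - i"] IiI bI by simp
    next
      fix k assume "k \<le> I - i"
      then have "i + k \<le> I" using iI by simp
      then have "seq_nth w (i + k) = (A # B # xs) ! blk w (i + k)" using I unfolding M_def by simp
      then show "seq_nth (seq_drop i w) k = (B # xs) ! blk (seq_drop i w) k"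
        using bd nth_drop'[OF vi] by simp
    qed
    then have "pre (B # xs) (seq_drop i w)" using 3(1)[of "seq_drop i w"] vi nd by auto
    moreover have "\<forall>j<i. seq_hd (seq_drop j w) = A"
    proof (intro allI impI)
      fix j assume "j < i"
      then have "seq_idx w j" using vi idx_down by (metis less_imp_le)
      then show "seq_hd (seq_drop j w) = A" using gA \<open>j < i\<close> hd_nth[of "seq_drop j w"] nth_drop'[of w j 0] by simp
    qed
    ultimately show "pre (A # B # xs) w" using w0 vi 3(2) by (auto simp: hd_nth)
  qed
qed



definition SW :: "'a seq \<Rightarrow> 'a list \<Rightarrow> bool" where
  "SW v xs \<longleftrightarrow> (\<forall>k<length xs. seq_idx v k \<and> seq_nth v k = xs ! k)"

lemma M_SW:
  assumes R: "Rep w v" and xs: "xs \<noteq> []"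
  shows "(\<exists>i. M w xs i) \<longleftrightarrow> SW v xs"
proof
  assume "\<exists>i. M w xs i"
  then obtain i where i: "M w xs i" by blast
  show "SW v xs" unfolding SW_def
  proof (intro allI impI)
    fix k assume k: "k < length xs"
    then have "k \<le> blk w i" using i unfolding M_def by simp
    then obtain i' where i': "i' \<le> i" "blk w i' = k" using blkf_ivt unfolding blk_def by blast
    have vi': "seq_idx w i'" using i i' idx_down unfolding M_def by blast
    have "seq_idx v k" using R vi' i' unfolding Rep_def by blast
    moreover have "seq_nth v k = seq_nth w i'" using R vi' i' unfolding Rep_def by blast
    moreover have "seq_nth w i' = xs ! k" using i i' unfolding M_def by blast
    ultimately show "seq_idx v k \<and> seq_nth v k = xs ! k" by simp
  qed
next
  assume S: "SW v xs"
  have "seq_idx v (length xs - 1)" using S xs unfolding SW_def by simp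
  then obtain i where i: "seq_idx w i" "blk w i = length xs - 1" using R unfolding Rep_def by blast
  have "M w xs i" unfolding M_def
  proof (intro conjI allI impI)
    fix k assume k: "k \<le> i"
    have vk: "seq_idx w k" using i k idx_down by blast
    have "blk w k \<le> length xs - 1" using blk_mono[OF k, of w] i by simp
    then have lt: "blk w k < length xs" using xs by (cases xs) auto
    have "seq_nth v (blk w k) = seq_nth w k" using R vk unfolding Rep_def by blast
    then show "seq_nth w k = xs ! blk w k" using S lt unfolding SW_def by simp
  qed (use i in auto)
  then show "\<exists>i. M w xs i" by blast
qed

lemma pre_SW: "seq_idx w 0 \<Longrightarrow> xs \<noteq> [] \<Longrightarrow> nodupl xs \<Longrightarrow> pre xs w \<longleftrightarrow> SW (destutter w) xs"
  using pre_sem M_SW rep_destutter by blast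

fun chi :: "'a seq \<Rightarrow> 'a seq \<Rightarrow> bool" where
  "chi (FinS xs) = (\<lambda>w. pre xs w \<and> (\<forall>B\<in>{B. B \<noteq> last xs}. \<not> pre (xs @ [B]) w))"
| "chi (InfS f) = (\<lambda>w. \<forall>n\<in>UNIV. pre (map f [0..<Suc n]) w)"

lemma chi_ltl: "chi \<sigma> \<in> ltl_inf"
proof (cases \<sigma>)
  case (FinS xs)
  have "(\<lambda>w. \<forall>B\<in>{B. B \<noteq> last xs}. \<not> pre (xs @ [B]) w) \<in> ltl_inf"
    by (rule ltl_ball) (rule ltl_inf.neg, rule pre_ltl)
  then show ?thesis using FinS ltl_and[OF pre_ltl] by simp
next
  case (InfS f)
  have "(\<lambda>w. \<forall>n\<in>UNIV. pre (map f [0..<Suc n]) w) \<in> ltl_inf"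
    by (rule ltl_ball) (rule pre_ltl)
  then show ?thesis using InfS by simp
qed

lemma chi_sem:
  assumes u: "seq_idx u 0" and w: "seq_idx w 0"
  shows "chi (destutter u) w \<longleftrightarrow> destutter w = destutter u"
proof -
  define \<sigma> where "\<sigma> = destutter u"
  define D where "D = destutter w"
  have Ru: "Rep u \<sigma>" unfolding \<sigma>_def by (rule rep_destutter[OF u])
  have Rw: "Rep w D" unfolding D_def by (rule rep_destutter[OF w])
  have s0: "seq_idx \<sigma> 0" using Ru u unfolding Rep_def by auto
  have ndD: "\<And>k. seq_idx D (Suc k) \<Longrightarrow> seq_nth D (Suc k) \<noteq> seq_nth D k" by (rule Rep_nodup[OF Rw])
  have nds: "\<And>k. seq_idx \<sigma> (Suc k) \<Longrightarrow> seq_nth \<sigma> (Suc k) \<noteq> seq_nth \<sigma> k" by (rule Rep_nodup[OF Ru])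
  show ?thesis unfolding \<sigma>_def[symmetric] D_def[symmetric]
  proof (cases \<sigma>)
    case (FinS xs)
    have xs0: "xs \<noteq> []" using s0 FinS by auto
    have ndx: "nodupl xs" unfolding nodupl_def using nds FinS by auto
    have pxs: "pre xs w \<longleftrightarrow> SW D xs" unfolding D_def by (rule pre_SW[OF w xs0 ndx])
    have ndB: "\<And>B. B \<noteq> last xs \<Longrightarrow> nodupl (xs @ [B])"
      unfolding nodupl_def
    proof (intro allI impI)
      fix B k assume B: "B \<noteq> last xs" and k: "Suc k < length (xs @ [B])"
      show "(xs @ [B]) ! Suc k \<noteq> (xs @ [B]) ! k"
      proof (cases "Suc k < length xs")
        case True then show ?thesis using ndx unfolding nodupl_def by (simp add: nth_append)
      next
        case False
        then have kk: "Suc k = length xs" using k by simp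
        then have "k = length xs - 1" by simp
        then show ?thesis using B xs0 kk by (simp add: nth_append last_conv_nth)
      qed
    qed
    have pB: "\<And>B. B \<noteq> last xs \<Longrightarrow> pre (xs @ [B]) w \<longleftrightarrow> SW D (xs @ [B])"
      unfolding D_def by (rule pre_SW[OF w]) (simp_all add: ndB)
    show "chi \<sigma> w \<longleftrightarrow> D = \<sigma>"
    proof
      assume c: "chi \<sigma> w"
      then have S: "SW D xs" using FinS pxs by simp
      have nv: "\<not> seq_idx D (length xs)"
      proof
        assume v: "seq_idx D (length xs)"
        define B where "B = seq_nth D (length xs)"
        have "length xs = Suc (length xs - 1)" using xs0 by simp
        then have "B \<noteq> seq_nth D (length xs - 1)" using ndD[of "length xs - 1"] v B_def by metis
        moreover have "seq_nth D (length xs - 1) = last xs" using S xs0 unfolding SW_def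
          by (simp add: last_conv_nth)
        ultimately have Bl: "B \<noteq> last xs" by simp
        have "SW D (xs @ [B])" using S v B_def unfolding SW_def
          by (auto simp: nth_append less_Suc_eq)
        then have "pre (xs @ [B]) w" using pB[OF Bl] by simp
        then show False using c FinS Bl by simp
      qed
      show "D = \<sigma>" unfolding FinS
      proof (rule seq_ext)
        fix i
        show "seq_idx D i \<longleftrightarrow> seq_idx (FinS xs) i"
        proof
          assume "seq_idx D i"
          then show "seq_idx (FinS xs) i" using nv idx_down[of D i "length xs"] by (cases "i < length xs") auto
        next
          assume "seq_idx (FinS xs) i" then show "seq_idx D i" using S unfolding SW_def by simp
        qed
      next
        fix i assume "seq_idx D i"
        then have "i < length xs" using nv idx_down[of D i "length xs"] by (cases "i < length xs") auto
        then show "seq_nth D i = seq_nth (FinS xs) i" using S unfolding SW_def by simp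
      qed
    next
      assume e: "D = \<sigma>"
      have "SW D xs" using e FinS unfolding SW_def by simp
      moreover have "\<forall>B\<in>{B. B \<noteq> last xs}. \<not> pre (xs @ [B]) w"
      proof
        fix B assume "B \<in> {B. B \<noteq> last xs}"
        then have Bl: "B \<noteq> last xs" by simp
        have "\<not> SW D (xs @ [B])" using e FinS unfolding SW_def by (auto dest: spec[of _ "length xs"])
        then show "\<not> pre (xs @ [B]) w" using pB[OF Bl] by simp
      qed
      ultimately show "chi \<sigma> w" using FinS pxs by simp
    qed
  next
    case (InfS f)
    have ndn: "\<And>n. nodupl (map f [0..<Suc n])" unfolding nodupl_def
    proof (intro allI impI)
      fix n k assume "Suc k < length (map f [0..<Suc n])"
      then show "map f [0..<Suc n] ! Suc k \<noteq> map f [0..<Suc n] ! k"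
        using nds[of k] InfS by (simp del: upt_Suc)
    qed
    have pn: "\<And>n. pre (map f [0..<Suc n]) w \<longleftrightarrow> SW D (map f [0..<Suc n])"
      unfolding D_def by (rule pre_SW[OF w]) (simp_all add: ndn del: upt_Suc)
    have "chi \<sigma> w \<longleftrightarrow> (\<forall>n. SW D (map f [0..<Suc n]))" using InfS pn by simp
    also have "\<dots> \<longleftrightarrow> (\<forall>k. seq_idx D k \<and> seq_nth D k = f k)"
    proof
      assume a: "\<forall>n. SW D (map f [0..<Suc n])"
      show "\<forall>k. seq_idx D k \<and> seq_nth D k = f k"
      proof
        fix k have "SW D (map f [0..<Suc k])" using a by simp
        then show "seq_idx D k \<and> seq_nth D k = f k" unfolding SW_def
          by (metis (no_types) add_0 diff_zero length_map length_upt lessI nth_map_upt)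
      qed
    next
      assume a: "\<forall>k. seq_idx D k \<and> seq_nth D k = f k"
      show "\<forall>n. SW D (map f [0..<Suc n])" unfolding SW_def using a
        by (simp del: upt_Suc)
    qed
    also have "\<dots> \<longleftrightarrow> D = \<sigma>"
    proof
      assume a: "\<forall>k. seq_idx D k \<and> seq_nth D k = f k"
      show "D = \<sigma>" unfolding InfS by (rule seq_ext) (use a in auto)
    next
      assume "D = \<sigma>" then show "\<forall>k. seq_idx D k \<and> seq_nth D k = f k" using InfS by simp
    qed
    finally show "chi \<sigma> w \<longleftrightarrow> D = \<sigma>" .
  qed
qed



lemma path_idx0: "is_path_from R s \<pi> \<Longrightarrow> seq_idx \<pi> 0"
  by (cases \<pi>) auto

lemma inf_max: "seq_infinite \<pi> \<Longrightarrow> is_maximal R \<pi>"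
  by (cases \<pi>) auto

lemma fin_col: "\<not> seq_infinite \<pi> \<Longrightarrow> \<not> seq_infinite (coloured L \<pi>)"
  by (cases \<pi>) (auto simp: coloured_def)

lemma Eqv_of:
  assumes "seq_idx w 0" "seq_idx w' 0" "destutter w = destutter w'" "seq_infinite w = seq_infinite w'"
  shows "Eqv w w'"
proof -
  have R1: "Rep w (destutter w)" and R2: "Rep w' (destutter w)"
    using rep_destutter[OF assms(1)] rep_destutter[OF assms(2)] assms(3) by auto
  show ?thesis unfolding Eqv_def
  proof (intro conjI allI impI)
    fix j show "(\<exists>i. seq_idx w i \<and> blk w i = j) \<longleftrightarrow> (\<exists>i. seq_idx w' i \<and> blk w' i = j)"
      using R1 R2 unfolding Rep_def by blast
  next
    fix i i' assume "seq_idx w i" "seq_idx w' i'" "blk w i = blk w' i'"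
    then show "seq_nth w i = seq_nth w' i'" using R1 R2 unfolding Rep_def by metis
  qed (use assms in auto)
qed

lemma match:
  assumes E: "div_dead_equiv R L s t" and p: "is_path_from R t \<pi>" and m: "is_maximal R \<pi>"
  shows "\<exists>\<pi>'. is_path_from R s \<pi>' \<and> is_maximal R \<pi>' \<and> coloured L \<pi>' = coloured L \<pi> \<and>
    seq_infinite \<pi>' = seq_infinite \<pi>"
proof (cases "seq_infinite \<pi>")
  case False
  then have "coloured L \<pi> \<in> deadlock_traces R L t" using p m unfolding deadlock_traces_def by blast
  then have "coloured L \<pi> \<in> deadlock_traces R L s" using E unfolding div_dead_equiv_def by simp
  then show ?thesis using False unfolding deadlock_traces_def by auto
next
  case True
  show ?thesis
  proof (cases "seq_infinite (coloured L \<pi>)")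
    case False
    then have "coloured L \<pi> \<in> divergent_traces R L t" using p True unfolding divergent_traces_def by blast
    then have "coloured L \<pi> \<in> divergent_traces R L s" using E unfolding div_dead_equiv_def by simp
    then show ?thesis using True inf_max unfolding divergent_traces_def by fastforce
  next
    case ci: True
    then have "coloured L \<pi> \<in> complete_traces R L t" using p m unfolding complete_traces_def by blast
    then have "coloured L \<pi> \<in> complete_traces R L s" using E unfolding div_dead_equiv_def by simp
    then have "\<exists>\<pi>'. is_path_from R s \<pi>' \<and> is_maximal R \<pi>' \<and> coloured L \<pi>' = coloured L \<pi>"
      unfolding complete_traces_def by (smt (verit) mem_Collect_eq)
    then obtain \<pi>' where "is_path_from R s \<pi>'" "is_maximal R \<pi>'" "coloured L \<pi>' = coloured L \<pi>"
      by blast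
    moreover have "seq_infinite \<pi>'" using fin_col[of \<pi>' L] ci \<open>coloured L \<pi>' = coloured L \<pi>\<close> by auto
    ultimately show ?thesis using True by auto
  qed
qed

lemma sat_transfer:
  assumes E: "div_dead_equiv R L s t" and psi: "\<psi> \<in> ltl_inf" and S: "state_sat R L s \<psi>"
  shows "state_sat R L t \<psi>"
  unfolding state_sat_def
proof (intro allI impI)
  fix \<pi> assume a: "is_path_from R t \<pi> \<and> is_maximal R \<pi>"
  obtain \<pi>' where \<pi>': "is_path_from R s \<pi>'" "is_maximal R \<pi>'" "coloured L \<pi>' = coloured L \<pi>"
    "seq_infinite \<pi>' = seq_infinite \<pi>" using match[OF E] a by blast
  have "\<psi> (seq_map L \<pi>')" using S \<pi>' unfolding state_sat_def by blast
  moreover have "Eqv (seq_map L \<pi>') (seq_map L \<pi>)"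
    by (rule Eqv_of) (use \<pi>' a path_idx0 in \<open>auto simp: coloured_def\<close>)
  ultimately show "\<psi> (seq_map L \<pi>)" using ltl_inv[OF psi] by blast
qed

lemma traces_incl:
  assumes H: "\<forall>\<psi>\<in>ltl_inf. state_sat R L t \<psi> \<longrightarrow> state_sat R L s \<psi>"
  shows "complete_traces R L s \<subseteq> complete_traces R L t \<and>
         divergent_traces R L s \<subseteq> divergent_traces R L t \<and>
         deadlock_traces R L s \<subseteq> deadlock_traces R L t"
proof (intro conjI subsetI)
  fix \<sigma> assume "\<sigma> \<in> complete_traces R L s"
  then obtain \<pi> where \<pi>: "\<sigma> = coloured L \<pi>" "is_path_from R s \<pi>" "is_maximal R \<pi>"
    unfolding complete_traces_def by blast
  have u: "seq_idx (seq_map L \<pi>) 0" using path_idx0[OF \<pi>(2)] by simp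
  show "\<sigma> \<in> complete_traces R L t"
  proof (rule ccontr)
    assume nt: "\<sigma> \<notin> complete_traces R L t"
    let ?\<psi> = "\<lambda>w. \<not> chi \<sigma> w"
    have ltl: "?\<psi> \<in> ltl_inf" by (rule ltl_inf.neg, rule chi_ltl)
    have "state_sat R L t ?\<psi>" unfolding state_sat_def
    proof (intro allI impI notI)
      fix \<pi>' assume a: "is_path_from R t \<pi>' \<and> is_maximal R \<pi>'" and c: "chi \<sigma> (seq_map L \<pi>')"
      have "coloured L \<pi>' = \<sigma>" using c chi_sem[OF u, of "seq_map L \<pi>'"] path_idx0[of R t "\<pi>'"] a \<pi>(1)
        by (simp add: coloured_def)
      then show False using nt a unfolding complete_traces_def by blast
    qed
    then have "state_sat R L s ?\<psi>" using H ltl by blast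
    then have "\<not> chi \<sigma> (seq_map L \<pi>)" using \<pi> unfolding state_sat_def by blast
    then show False using chi_sem[OF u u] \<pi>(1) by (simp add: coloured_def)
  qed
next
  fix \<sigma> assume "\<sigma> \<in> divergent_traces R L s"
  then obtain \<pi> where \<pi>: "\<sigma> = coloured L \<pi>" "is_path_from R s \<pi>" "seq_infinite \<pi>" "\<not> seq_infinite \<sigma>"
    unfolding divergent_traces_def by blast
  have u: "seq_idx (seq_map L \<pi>) 0" using path_idx0[OF \<pi>(2)] by simp
  show "\<sigma> \<in> divergent_traces R L t"
  proof (rule ccontr)
    assume nt: "\<sigma> \<notin> divergent_traces R L t"
    let ?\<psi> = "\<lambda>w. \<not> (chi \<sigma> w \<and> seq_infinite w)"
    have ltl: "?\<psi> \<in> ltl_inf" by (rule ltl_inf.neg, rule ltl_and, rule chi_ltl, rule ltl_inf.infty)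
    have "state_sat R L t ?\<psi>" unfolding state_sat_def
    proof (intro allI impI notI)
      fix \<pi>' assume a: "is_path_from R t \<pi>' \<and> is_maximal R \<pi>'"
        and c: "chi \<sigma> (seq_map L \<pi>') \<and> seq_infinite (seq_map L \<pi>')"
      have "coloured L \<pi>' = \<sigma>" using c chi_sem[OF u, of "seq_map L \<pi>'"] path_idx0[of R t "\<pi>'"] a \<pi>(1)
        by (simp add: coloured_def)
      then show False using nt a c \<pi>(4) unfolding divergent_traces_def by auto
    qed
    then have "state_sat R L s ?\<psi>" using H ltl by blast
    then have "\<not> (chi \<sigma> (seq_map L \<pi>) \<and> seq_infinite (seq_map L \<pi>))"
      using \<pi> inf_max unfolding state_sat_def by blast
    then show False using chi_sem[OF u u] \<pi>(1,3) by (simp add: coloured_def)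
  qed
next
  fix \<sigma> assume "\<sigma> \<in> deadlock_traces R L s"
  then obtain \<pi> where \<pi>: "\<sigma> = coloured L \<pi>" "is_path_from R s \<pi>" "\<not> seq_infinite \<pi>" "is_maximal R \<pi>"
    unfolding deadlock_traces_def by blast
  have u: "seq_idx (seq_map L \<pi>) 0" using path_idx0[OF \<pi>(2)] by simp
  show "\<sigma> \<in> deadlock_traces R L t"
  proof (rule ccontr)
    assume nt: "\<sigma> \<notin> deadlock_traces R L t"
    let ?\<psi> = "\<lambda>w. \<not> (chi \<sigma> w \<and> \<not> seq_infinite w)"
    have ltl: "?\<psi> \<in> ltl_inf"
      by (rule ltl_inf.neg, rule ltl_and, rule chi_ltl, rule ltl_inf.neg, rule ltl_inf.infty)
    have "state_sat R L t ?\<psi>" unfolding state_sat_def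
    proof (intro allI impI notI)
      fix \<pi>' assume a: "is_path_from R t \<pi>' \<and> is_maximal R \<pi>'"
        and c: "chi \<sigma> (seq_map L \<pi>') \<and> \<not> seq_infinite (seq_map L \<pi>')"
      have "coloured L \<pi>' = \<sigma>" using c chi_sem[OF u, of "seq_map L \<pi>'"] path_idx0[of R t "\<pi>'"] a \<pi>(1)
        by (simp add: coloured_def)
      then show False using nt a c unfolding deadlock_traces_def by auto
    qed
    then have "state_sat R L s ?\<psi>" using H ltl by blast
    then have "\<not> (chi \<sigma> (seq_map L \<pi>) \<and> \<not> seq_infinite (seq_map L \<pi>))"
      using \<pi> unfolding state_sat_def by blast
    then show False using chi_sem[OF u u] \<pi>(1,3) by (simp add: coloured_def)
  qed
qed

theorem theorem9p5:
  fixes R :: "'s \<Rightarrow> 's \<Rightarrow> bool" and L :: "'s \<Rightarrow> 'p set" and s t :: 's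
  shows "div_dead_equiv R L s t \<longleftrightarrow>
         (\<forall>\<psi>\<in>ltl_inf. state_sat R L s \<psi> \<longleftrightarrow> state_sat R L t \<psi>)"
proof
  assume E: "div_dead_equiv R L s t"
  have E': "div_dead_equiv R L t s" using E unfolding div_dead_equiv_def by simp
  show "\<forall>\<psi>\<in>ltl_inf. state_sat R L s \<psi> \<longleftrightarrow> state_sat R L t \<psi>"
    using sat_transfer[OF E] sat_transfer[OF E'] by blast
next
  assume H: "\<forall>\<psi>\<in>ltl_inf. state_sat R L s \<psi> \<longleftrightarrow> state_sat R L t \<psi>"
  have 1: "\<forall>\<psi>\<in>ltl_inf. state_sat R L t \<psi> \<longrightarrow> state_sat R L s \<psi>" using H by blast
  have 2: "\<forall>\<psi>\<in>ltl_inf. state_sat R L s \<psi> \<longrightarrow> state_sat R L t \<psi>" using H by blast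
  show "div_dead_equiv R L s t" unfolding div_dead_equiv_def
    using traces_incl[OF 1] traces_incl[OF 2] by blast
qed

end
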